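(* Let $\mathfrak R$ be an iterated graph system satisfying (GR1)–(GR3), with replacement graphs $G_m$. Every path in a replacement graph containing at most two distinct vertices, and every non-collapsing path, is an intersection path. Moreover, if $\theta$ is an intersection path in $G_m$ and $\{\theta_n\}_{n\in\mathbb N}$ is a sequence of paths witnessing this (as in the definition of intersection path), then $\theta_n$ is non-collapsing for all sufficiently large $n\in\mathbb N$. In particular, $\mathfrak R$ is of bounded geometry if and only if \[ \sup_\theta\operatorname{diam}(\theta)<\infty, \] where the supremum is over all non-collapsing paths $\theta$ in all replacement graphs $G_n$, and $\operatorname{diam}(\theta)$ is the diameter of the vertex set of $\theta$ with respect to $d_{G_n}$.
   Context: Graphs: $(V,E)$, $V$ finite non-empty, $E\subseteq V\times V$, $(x,y)\in E\Rightarrow(y,x)\notin E$; $\{x,y\}\in E$ means either orientation. A path is a sequence $[x_1,\dots,x_k]$ ($k\ge1$, repetitions allowed) with $\{x_i,x_{i+1}\}\in E$; its length is $k-1$; $d_G$ is the shortest-path metric. An iterated graph system (IGS) consists of a connected graph $G_1=(S,E)$, a finite set $\mathcal T$ of types, a surjective typing $\mathfrak t:E\to\mathcal T$ and non-empty gluing rules $I_t\subseteq S\times S$. With $W_m=S^m$, $W_\#=\bigcup_{m\ge1} W_m$, $[w]_k=w_1\cdots w_k$ and $|w\wedge v|=\min\{k:[w]_k\neq[v]_k\}$ for distinct words of equal length, the replacement graphs $G_m=(W_m,E_m)$ are defined recursively: $(w,v)\in E_{m+1}$ iff either (1) $[w]_m=[v]_m$ and $(w_{m+1},v_{m+1})\in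 E$ (type $\mathfrak t(w_{m+1},v_{m+1})$), or (2) $([w]_m,[v]_m)\in E_m$ and $(w_{m+1},v_{m+1})\in I_{\mathfrak t([w]_m,[v]_m)}$ (type $\mathfrak t([w]_m,[v]_m)$). (GR1)–(GR3): with $I_{t,+}$, $I_{t,-}$ the first, resp. second, coordinates of $I_t$: (GR1) each $w\in S$ has at most one $v$ with $(w,v)\in I_t$ and at most one $v$ with $(v,w)\in I_t$; (GR2) for each $t$ and $w$, $w$ cannot both have some $v$ with $(w,v)\in I_t$ and an outgoing edge of $G_1$ of type $t$, and cannot both have some $v$ with $(v,w)\in I_t$ and an incoming edge of $G_1$ of type $t$; (GR3) $I_{t,-}\cap I_{t,+}=\emptyset$. For $n\ge k$, $\pi_{n,k}:W_n\to W_k$, $w\mapsto[w]_k$; it maps paths of $G_n$ to paths of $G_k$ by applying it to each vertex and deleting consecutive repetitions. A path $\theta$ in $G_m$ is an intersection path if there are paths $\theta_n$ in $G_n$ for all $n\in\mathbb N$ with $\theta_m=\theta$, $\pi_{n,k}(\theta_n)=\theta_k$ for all $n>k$, and $\lim_{n\to\infty}\operatorname{len}(\theta_n)<\infty$. The fundamental neighbourhood of $w\in W_\#$ is $\mathcal N(w)=\{v\in W_{|w|}:$ there is an intersection path from $w$ to $v\}$; $\mathfrak R$ is of bounded geometry if $\sup_{w\in W_\#}\operatorname{diam}(\mathcal N(w))<\infty$ (diameter in $d_{G_{|w|}}$). For $n>1$, a path $[w^{(1)},\dots,w^{(k)}]$ in $G_n$ is non-collapsing if $|w^{(i)}\wedge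 w^{(i+1)}|<n$ for all $i=1,\dots,k-1$. *)

theory Defs
  imports Main "HOL-Library.Extended_Nat"
begin

text \<open>Vertices of G_1 have type 'v (the set S), types have
type 't (the set T), the typing is tp (meaningful on E), the gluing rules are I t.
Words are lists; w = w_1 ... w_m corresponds to the list [w_1,...,w_m].\<close>

definition is_IGS :: "'v set \<Rightarrow> ('v \<times> 'v) set \<Rightarrow> ('v \<times> 'v \<Rightarrow> 't) \<Rightarrow> 't set
    \<Rightarrow> ('t \<Rightarrow> ('v \<times> 'v) set) \<Rightarrow> bool" where
  "is_IGS S E tp T I \<longleftrightarrow>
     finite S \<and> S \<noteq> {} \<and> E \<subseteq> S \<times> S \<and>
     (\<forall>x y. (x, y) \<in> E \<longrightarrow> (y, x) \<notin> E) \<and>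
     (\<forall>x\<in>S. \<forall>y\<in>S. (x, y) \<in> (E \<union> E\<inverse>)\<^sup>*) \<and>
     finite T \<and> tp ` E = T \<and>
     (\<forall>t\<in>T. I t \<noteq> {} \<and> I t \<subseteq> S \<times> S)"

definition GR1 :: "'v set \<Rightarrow> 't set \<Rightarrow> ('t \<Rightarrow> ('v \<times> 'v) set) \<Rightarrow> bool" where
  "GR1 S T I \<longleftrightarrow> (\<forall>t\<in>T. \<forall>w\<in>S.
     (\<forall>v v'. (w, v) \<in> I t \<longrightarrow> (w, v') \<in> I t \<longrightarrow> v = v') \<and>
     (\<forall>v v'. (v, w) \<in> I t \<longrightarrow> (v', w) \<in> I t \<longrightarrow> v = v'))"

definition GR2 :: "'v set \<Rightarrow> ('v \<times> 'v) set \<Rightarrow> ('v \<times> 'v \<Rightarrow> 't) \<Rightarrow> 't set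
    \<Rightarrow> ('t \<Rightarrow> ('v \<times> 'v) set) \<Rightarrow> bool" where
  "GR2 S E tp T I \<longleftrightarrow> (\<forall>t\<in>T. \<forall>w\<in>S.
     \<not> ((\<exists>v. (w, v) \<in> I t) \<and> (\<exists>v. (w, v) \<in> E \<and> tp (w, v) = t)) \<and>
     \<not> ((\<exists>v. (v, w) \<in> I t) \<and> (\<exists>v. (v, w) \<in> E \<and> tp (v, w) = t)))"

definition GR3 :: "'t set \<Rightarrow> ('t \<Rightarrow> ('v \<times> 'v) set) \<Rightarrow> bool" where
  "GR3 T I \<longleftrightarrow> (\<forall>t\<in>T. snd ` I t \<inter> fst ` I t = {})"

definition words :: "'v set \<Rightarrow> nat \<Rightarrow> 'v list set" where
  "words S m = {w. length w = m \<and> set w \<subseteq> S}"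

definition all_words :: "'v set \<Rightarrow> 'v list set" where
  "all_words S = (\<Union>m\<in>{1..}. words S m)"

fun typed_edges :: "'v set \<Rightarrow> ('v \<times> 'v) set \<Rightarrow> ('v \<times> 'v \<Rightarrow> 't)
    \<Rightarrow> ('t \<Rightarrow> ('v \<times> 'v) set) \<Rightarrow> nat \<Rightarrow> ('v list \<times> 'v list \<times> 't) set" where
  "typed_edges S E tp I 0 = {}"
| "typed_edges S E tp I (Suc 0) = {([a], [b], tp (a, b)) | a b. (a, b) \<in> E}"
| "typed_edges S E tp I (Suc (Suc m)) =
     {(u @ [a], u @ [b], tp (a, b)) | u a b. u \<in> words S (Suc m) \<and> (a, b) \<in> E}
   \<union> {(u @ [a], v @ [b], t) | u v a b t. (u, v, t) \<in> typed_edges S E tp I (Suc m) \<and> (a, b) \<in> I t}"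

definition edges :: "'v set \<Rightarrow> ('v \<times> 'v) set \<Rightarrow> ('v \<times> 'v \<Rightarrow> 't)
    \<Rightarrow> ('t \<Rightarrow> ('v \<times> 'v) set) \<Rightarrow> nat \<Rightarrow> ('v list \<times> 'v list) set" where
  "edges S E tp I m = {(w, v). \<exists>t. (w, v, t) \<in> typed_edges S E tp I m}"

definition is_path :: "'v set \<Rightarrow> ('v \<times> 'v) set \<Rightarrow> ('v \<times> 'v \<Rightarrow> 't)
    \<Rightarrow> ('t \<Rightarrow> ('v \<times> 'v) set) \<Rightarrow> nat \<Rightarrow> 'v list list \<Rightarrow> bool" where
  "is_path S E tp I m \<theta> \<longleftrightarrow> \<theta> \<noteq> [] \<and> set \<theta> \<subseteq> words S m \<and>
     (\<forall>i. Suc i < length \<theta> \<longrightarrow>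
        (\<theta> ! i, \<theta> ! Suc i) \<in> edges S E tp I m \<or> (\<theta> ! Suc i, \<theta> ! i) \<in> edges S E tp I m)"

definition path_len :: "'a list \<Rightarrow> nat" where
  "path_len \<theta> = length \<theta> - 1"

definition dG :: "'v set \<Rightarrow> ('v \<times> 'v) set \<Rightarrow> ('v \<times> 'v \<Rightarrow> 't)
    \<Rightarrow> ('t \<Rightarrow> ('v \<times> 'v) set) \<Rightarrow> nat \<Rightarrow> 'v list \<Rightarrow> 'v list \<Rightarrow> nat" where
  "dG S E tp I m x y = (LEAST k. \<exists>\<theta>. is_path S E tp I m \<theta> \<and> hd \<theta> = x \<and> last \<theta> = y \<and> path_len \<theta> = k)"

definition diamG :: "'v set \<Rightarrow> ('v \<times> 'v) set \<Rightarrow> ('v \<times> 'v \<Rightarrow> 't)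
    \<Rightarrow> ('t \<Rightarrow> ('v \<times> 'v) set) \<Rightarrow> nat \<Rightarrow> 'v list set \<Rightarrow> enat" where
  "diamG S E tp I m A = (SUP x\<in>A. SUP y\<in>A. enat (dG S E tp I m x y))"

definition proj :: "nat \<Rightarrow> 'v list list \<Rightarrow> 'v list list" where
  "proj k \<theta> = remdups_adj (map (take k) \<theta>)"

definition ipath_witness :: "'v set \<Rightarrow> ('v \<times> 'v) set \<Rightarrow> ('v \<times> 'v \<Rightarrow> 't)
    \<Rightarrow> ('t \<Rightarrow> ('v \<times> 'v) set) \<Rightarrow> nat \<Rightarrow> 'v list list \<Rightarrow> (nat \<Rightarrow> 'v list list) \<Rightarrow> bool" where
  "ipath_witness S E tp I m \<theta> \<Theta> \<longleftrightarrow>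
     1 \<le> m \<and> (\<forall>n\<ge>1. is_path S E tp I n (\<Theta> n)) \<and> \<Theta> m = \<theta> \<and>
     (\<forall>n k. 1 \<le> k \<and> k < n \<longrightarrow> proj k (\<Theta> n) = \<Theta> k) \<and>
     convergent (\<lambda>n. real (path_len (\<Theta> n)))"

definition intersection_path :: "'v set \<Rightarrow> ('v \<times> 'v) set \<Rightarrow> ('v \<times> 'v \<Rightarrow> 't)
    \<Rightarrow> ('t \<Rightarrow> ('v \<times> 'v) set) \<Rightarrow> nat \<Rightarrow> 'v list list \<Rightarrow> bool" where
  "intersection_path S E tp I m \<theta> \<longleftrightarrow> (\<exists>\<Theta>. ipath_witness S E tp I m \<theta> \<Theta>)"

definition fund_nbhd :: "'v set \<Rightarrow> ('v \<times> 'v) set \<Rightarrow> ('v \<times> 'v \<Rightarrow> 't)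
    \<Rightarrow> ('t \<Rightarrow> ('v \<times> 'v) set) \<Rightarrow> 'v list \<Rightarrow> 'v list set" where
  "fund_nbhd S E tp I w = {v \<in> words S (length w). \<exists>\<theta>.
     intersection_path S E tp I (length w) \<theta> \<and> hd \<theta> = w \<and> last \<theta> = v}"

definition bounded_geometry :: "'v set \<Rightarrow> ('v \<times> 'v) set \<Rightarrow> ('v \<times> 'v \<Rightarrow> 't)
    \<Rightarrow> ('t \<Rightarrow> ('v \<times> 'v) set) \<Rightarrow> bool" where
  "bounded_geometry S E tp I \<longleftrightarrow>
     (SUP w\<in>all_words S. diamG S E tp I (length w) (fund_nbhd S E tp I w)) < \<infinity>"

definition wedge :: "'v list \<Rightarrow> 'v list \<Rightarrow> nat" where
  "wedge w v = (LEAST k. take k w \<noteq> take k v)"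

definition non_collapsing :: "nat \<Rightarrow> 'v list list \<Rightarrow> bool" where
  "non_collapsing n \<theta> \<longleftrightarrow> (\<forall>i. Suc i < length \<theta> \<longrightarrow> wedge (\<theta> ! i) (\<theta> ! Suc i) < n)"

end

theory Submission
  imports Defs Complex_Main
begin

locale igsl =
  fixes S :: "'v set" and E :: "('v \<times> 'v) set" and tp :: "'v \<times> 'v \<Rightarrow> 't"
    and T :: "'t set" and I :: "'t \<Rightarrow> ('v \<times> 'v) set"
  assumes igs: "is_IGS S E tp T I"
begin

abbreviation te where "te \<equiv> typed_edges S E tp I"

lemma E_sub: "E \<subseteq> S \<times> S" and E_asym: "(x, y) \<in> E \<Longrightarrow> (y, x) \<notin> E"
  and T_eq: "tp ` E = T" and I_ne: "t \<in> T \<Longrightarrow> I t \<noteq> {}" and I_sub: "t \<in> T \<Longrightarrow> I t \<subseteq> S \<times> S"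
  and S_ne: "S \<noteq> {}"
  using igs unfolding is_IGS_def by auto

lemma te_props: "(x, y, t) \<in> te n \<Longrightarrow> x \<in> words S n \<and> y \<in> words S n \<and> t \<in> T \<and> x \<noteq> y"
proof (induction n arbitrary: x y t rule: less_induct)
  case (less n)
  show ?case
  proof (cases n)
    case 0 then show ?thesis using less.prems by simp
  next
    case (Suc j)
    show ?thesis
    proof (cases j)
      case 0
      then show ?thesis using less.prems Suc E_sub E_asym T_eq
        by (auto simp: words_def)
    next
      case (Suc j')
      from less.prems \<open>n = Suc j\<close> Suc
      consider (a) u a b where "x = u @ [a]" "y = u @ [b]" "t = tp (a, b)" "u \<in> words S (Suc j')" "(a, b) \<in> E"
        | (b) u v a b where "x = u @ [a]" "y = v @ [b]" "(u, v, t) \<in> te (Suc j')" "(a, b) \<in> I t"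
        by auto
      then show ?thesis
      proof cases
        case a
        then show ?thesis using E_sub E_asym T_eq Suc \<open>n = Suc j\<close> by (auto simp: words_def)
      next
        case b
        have ih: "u \<in> words S (Suc j') \<and> v \<in> words S (Suc j') \<and> t \<in> T \<and> u \<noteq> v"
          using less.IH[of "Suc j'"] b Suc \<open>n = Suc j\<close> by auto
        then show ?thesis using b I_sub[of t] Suc \<open>n = Suc j\<close> by (auto simp: words_def)
      qed
    qed
  qed
qed

lemma te_ext: "(x, y, t) \<in> te (Suc j) \<Longrightarrow> (a, b) \<in> I t \<Longrightarrow> (x @ [a], y @ [b], t) \<in> te (Suc (Suc j))"
  by auto

lemma te_ext_rep: "(x, y, t) \<in> te n \<Longrightarrow> 1 \<le> n \<Longrightarrow> (a, b) \<in> I t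
   \<Longrightarrow> (x @ replicate r a, y @ replicate r b, t) \<in> te (n + r)"
proof (induction r)
  case 0 then show ?case by simp
next
  case (Suc r)
  obtain j where j: "n + r = Suc j" using Suc.prems by (cases "n + r") auto
  have "(x @ replicate r a @ [a], y @ replicate r b @ [b], t) \<in> te (Suc (Suc j))"
    using te_ext[of "x @ replicate r a" "y @ replicate r b" t j a b] Suc j by simp
  moreover have "replicate r a @ [a] = replicate (Suc r) a" "replicate r b @ [b] = replicate (Suc r) b"
    by (simp_all add: replicate_append_same)
  ultimately show ?case using j by simp
qed

lemma te_proj: "(x, y, t) \<in> te n \<Longrightarrow> 1 \<le> k \<Longrightarrow> k \<le> n
  \<Longrightarrow> take k x = take k y \<or> (\<exists>t'. (take k x, take k y, t') \<in> te k)"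
proof (induction n arbitrary: x y t rule: less_induct)
  case (less n)
  have lx: "length x = n" "length y = n" using te_props[OF less.prems(1)] by (auto simp: words_def)
  show ?case
  proof (cases "k = n")
    case True then show ?thesis using less.prems lx by auto
  next
    case False
    then obtain j' where n: "n = Suc (Suc j')" using less.prems
      by (metis Suc_le_D le_antisym le_trans not0_implies_Suc One_nat_def le_Suc_eq)
    have kj: "k \<le> Suc j'" using False less.prems n by auto
    from less.prems n
    consider (a) u a b where "x = u @ [a]" "y = u @ [b]" "u \<in> words S (Suc j')"
        | (b) u v a b where "x = u @ [a]" "y = v @ [b]" "(u, v, t) \<in> te (Suc j')"
        by auto
    then show ?thesis
    proof cases
      case a then show ?thesis using kj by (auto simp: words_def)
    next
      case b
      have luv: "length u = Suc j'" "length v = Suc j'" using te_props[OF b(3)] by (auto simp: words_def)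
      have "take k u = take k v \<or> (\<exists>t'. (take k u, take k v, t') \<in> te k)"
        using less.IH[OF _ b(3) less.prems(2) kj] n by auto
      then show ?thesis using b kj luv by auto
    qed
  qed
qed

lemma te_noncoll: "(x, y, t) \<in> te n \<Longrightarrow> 1 < n \<Longrightarrow> take (n - 1) x \<noteq> take (n - 1) y
  \<Longrightarrow> (last x, last y) \<in> I t"
proof -
  assume h: "(x, y, t) \<in> te n" "1 < n" "take (n - 1) x \<noteq> take (n - 1) y"
  then obtain j' where n: "n = Suc (Suc j')" by (metis Suc_lessE less_imp_Suc_add One_nat_def add_Suc_right)
  from h n
  consider (a) u a b where "x = u @ [a]" "y = u @ [b]" "u \<in> words S (Suc j')"
      | (b) u v a b where "x = u @ [a]" "y = v @ [b]" "(u, v, t) \<in> te (Suc j')" "(a, b) \<in> I t"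
      by auto
  then show ?thesis
  proof cases
    case a then show ?thesis using h n by (auto simp: words_def)
  next
    case b then show ?thesis by simp
  qed
qed

abbreviation adj where "adj n x y \<equiv> (x, y) \<in> edges S E tp I n \<or> (y, x) \<in> edges S E tp I n"

lemma is_path_succ: "is_path S E tp I n \<theta> \<longleftrightarrow> \<theta> \<noteq> [] \<and> set \<theta> \<subseteq> words S n \<and> successively (adj n) \<theta>"
  unfolding is_path_def successively_conv_nth by auto

lemma adj_props: "adj n x y \<Longrightarrow> x \<noteq> y"
  unfolding edges_def using te_props by blast

lemma path_dadj: "is_path S E tp I n \<theta> \<Longrightarrow> distinct_adj \<theta>"
  unfolding is_path_succ distinct_adj_def using adj_props
  by (auto elim!: successively_mono)

lemma remdups_adj_idem: "remdups_adj (remdups_adj ys) = remdups_adj ys"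
  using distinct_adj_altdef distinct_adj_remdups_adj by blast

lemma remdups_adj_Cons_rd: "remdups_adj (a # remdups_adj ys) = remdups_adj (a # ys)"
  by (simp only: remdups_adj_Cons remdups_adj_idem)

lemma remdups_adj_map_remdups_adj: "remdups_adj (map f (remdups_adj xs)) = remdups_adj (map f xs)"
proof (induction xs rule: remdups_adj.induct)
  case (3 x y xs)
  show ?case
  proof (cases "x = y")
    case True then show ?thesis using 3 by simp
  next
    case False
    have "remdups_adj (map f (remdups_adj (x # y # xs))) = remdups_adj (f x # map f (remdups_adj (y # xs)))"
      using False by simp
    also have "\<dots> = remdups_adj (f x # remdups_adj (map f (remdups_adj (y # xs))))"
      by (simp only: remdups_adj_Cons_rd)
    also have "\<dots> = remdups_adj (f x # remdups_adj (map f (y # xs)))" using 3(2) False by simp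
    also have "\<dots> = remdups_adj (map f (x # y # xs))" by (simp only: remdups_adj_Cons_rd list.map)
    finally show ?thesis .
  qed
qed simp_all

lemma proj_proj: "k \<le> n \<Longrightarrow> proj k (proj n \<theta>) = proj k \<theta>"
  unfolding proj_def by (simp add: remdups_adj_map_remdups_adj min_def o_def)

lemma words_take: "x \<in> words S n \<Longrightarrow> k \<le> n \<Longrightarrow> take k x \<in> words S k"
  unfolding words_def using set_take_subset by fastforce

lemma adj_proj: "adj n x y \<Longrightarrow> 1 \<le> k \<Longrightarrow> k \<le> n \<Longrightarrow> take k x = take k y \<or> adj k (take k x) (take k y)"
proof -
  assume h: "adj n x y" "1 \<le> k" "k \<le> n"
  then consider t where "(x, y, t) \<in> te n" | t where "(y, x, t) \<in> te n" unfolding edges_def by auto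
  then show ?thesis
  proof cases
    case 1 then show ?thesis using te_proj[OF 1 h(2,3)] unfolding edges_def by auto
  next
    case 2 then show ?thesis using te_proj[OF 2 h(2,3)] unfolding edges_def by auto
  qed
qed

lemma proj_path: "is_path S E tp I n \<theta> \<Longrightarrow> 1 \<le> k \<Longrightarrow> k \<le> n \<Longrightarrow> is_path S E tp I k (proj k \<theta>)"
proof -
  assume h: "is_path S E tp I n \<theta>" "1 \<le> k" "k \<le> n"
  have s1: "successively (\<lambda>x y. x = y \<or> adj k x y) (map (take k) \<theta>)"
    unfolding successively_map
  proof (rule successively_mono)
    show "successively (adj n) \<theta>" using h unfolding is_path_succ by simp
  qed (use adj_proj h in blast)
  have s2: "successively (\<lambda>x y. x = y \<or> adj k x y) (proj k \<theta>)"
    unfolding proj_def by (rule successively_remdups_adjI[OF s1])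
  have s3: "successively (\<noteq>) (proj k \<theta>)" unfolding proj_def
    using distinct_adj_remdups_adj[of "map (take k) \<theta>"] unfolding distinct_adj_def by simp
  have "successively (adj k) (proj k \<theta>)"
    using s2 s3 unfolding successively_conv_nth by blast
  moreover have "set (proj k \<theta>) \<subseteq> words S k" using h words_take unfolding proj_def is_path_succ by auto
  moreover have "proj k \<theta> \<noteq> []" using h unfolding proj_def is_path_def by simp
  ultimately show ?thesis unfolding is_path_succ by simp
qed

lemma proj_id: "is_path S E tp I n \<theta> \<Longrightarrow> proj n \<theta> = \<theta>"
proof -
  assume h: "is_path S E tp I n \<theta>"
  have "map (take n) \<theta> = \<theta>"
    using h unfolding is_path_def words_def by (intro map_idI) auto
  then show ?thesis unfolding proj_def using path_dadj[OF h] distinct_adj_altdef by metis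
qed

lemma proj_hd: "\<theta> \<noteq> [] \<Longrightarrow> hd (proj k \<theta>) = take k (hd \<theta>)"
  and proj_last: "\<theta> \<noteq> [] \<Longrightarrow> last (proj k \<theta>) = take k (last \<theta>)"
  unfolding proj_def by (simp_all add: hd_map last_map)

lemma proj_len: "path_len (proj k \<theta>) \<le> path_len \<theta>"
  unfolding proj_def path_len_def using remdups_adj_length[of "map (take k) \<theta>"] by simp

lemma map_cong_take: "m \<le> k \<Longrightarrow> k \<le> n \<Longrightarrow> (\<And>x. x \<in> set xs \<Longrightarrow> length x = m)
  \<Longrightarrow> map (take k) (map (\<lambda>x. x @ replicate (n - m) (c x)) xs) = map (\<lambda>x. x @ replicate (k - m) (c x)) xs"
  by (induction xs) (auto simp: take_append)

lemma map_cong_take2: "k \<le> m \<Longrightarrow> (\<And>x. x \<in> set xs \<Longrightarrow> length x = m)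
  \<Longrightarrow> map (take k) (map (\<lambda>x. x @ replicate (n - m) (c x)) xs) = map (take k) xs"
  by (induction xs) (auto simp: take_append)

lemma ext_ip:
  assumes p: "is_path S E tp I m \<theta>" and m: "1 \<le> m" and cS: "\<forall>x\<in>set \<theta>. c x \<in> S"
    and ce: "\<forall>i. Suc i < length \<theta> \<longrightarrow> (\<exists>t. ((\<theta>!i, \<theta>!Suc i, t) \<in> te m \<and> (c (\<theta>!i), c (\<theta>!Suc i)) \<in> I t)
               \<or> ((\<theta>!Suc i, \<theta>!i, t) \<in> te m \<and> (c (\<theta>!Suc i), c (\<theta>!i)) \<in> I t))"
  shows "intersection_path S E tp I m \<theta>"
proof -
  define P where "P n = map (\<lambda>x. x @ replicate (n - m) (c x)) \<theta>" for n
  have lenx: "\<And>x. x \<in> set \<theta> \<Longrightarrow> length x = m" using p unfolding is_path_def words_def by auto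
  have Pm: "P m = \<theta>" unfolding P_def by simp
  have Ppath: "is_path S E tp I n (P n)" if mn: "m \<le> n" for n
    unfolding is_path_def
  proof (intro conjI allI impI)
    show "P n \<noteq> []" using p unfolding P_def is_path_def by simp
    show "set (P n) \<subseteq> words S n"
    proof
      fix y assume "y \<in> set (P n)"
      then obtain x where x: "x \<in> set \<theta>" "y = x @ replicate (n - m) (c x)" unfolding P_def by auto
      have "x \<in> words S m" using p x(1) unfolding is_path_def by blast
      then have "length x = m" "set x \<subseteq> S" unfolding words_def by auto
      moreover have "c x \<in> S" using cS x(1) by blast
      ultimately show "y \<in> words S n" using x(2) mn unfolding words_def by auto
    qed
    fix i assume i: "Suc i < length (P n)"
    then have i': "Suc i < length \<theta>" unfolding P_def by simp
    have nn: "m + (n - m) = n" using mn by simp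
    from ce i' obtain t where
      "((\<theta>!i, \<theta>!Suc i, t) \<in> te m \<and> (c (\<theta>!i), c (\<theta>!Suc i)) \<in> I t)
               \<or> ((\<theta>!Suc i, \<theta>!i, t) \<in> te m \<and> (c (\<theta>!Suc i), c (\<theta>!i)) \<in> I t)" by blast
    then show "(P n ! i, P n ! Suc i) \<in> edges S E tp I n \<or> (P n ! Suc i, P n ! i) \<in> edges S E tp I n"
    proof
      assume h: "(\<theta>!i, \<theta>!Suc i, t) \<in> te m \<and> (c (\<theta>!i), c (\<theta>!Suc i)) \<in> I t"
      have "(P n ! i, P n ! Suc i, t) \<in> te n"
        using te_ext_rep[of "\<theta>!i" "\<theta>!Suc i" t m "c (\<theta>!i)" "c (\<theta>!Suc i)" "n - m"] h m nn i'
        unfolding P_def by simp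
      then show ?thesis unfolding edges_def by auto
    next
      assume h: "(\<theta>!Suc i, \<theta>!i, t) \<in> te m \<and> (c (\<theta>!Suc i), c (\<theta>!i)) \<in> I t"
      have "(P n ! Suc i, P n ! i, t) \<in> te n"
        using te_ext_rep[of "\<theta>!Suc i" "\<theta>!i" t m "c (\<theta>!Suc i)" "c (\<theta>!i)" "n - m"] h m nn i'
        unfolding P_def by simp
      then show ?thesis unfolding edges_def by auto
    qed
  qed
  have Ptake: "map (take k) (P n) = P k" if "m \<le> k" "k \<le> n" for k n
    unfolding P_def using that lenx by (intro map_cong_take) simp
  have Ptake2: "map (take k) (P n) = map (take k) \<theta>" if "k \<le> m" for k n
    unfolding P_def using that lenx by (intro map_cong_take2) simp
  define \<Theta> where "\<Theta> n = (if n \<le> m then proj n \<theta> else P n)" for n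
  have \<Theta>m: "\<Theta> m = \<theta>" unfolding \<Theta>_def using proj_id[OF p] by simp
  have \<Theta>ge: "\<Theta> n = P n" if "m \<le> n" for n
    using that \<Theta>m Pm unfolding \<Theta>_def by (cases "n = m") auto
  have w1: "is_path S E tp I n (\<Theta> n)" if n: "1 \<le> n" for n
  proof (cases "n \<le> m")
    case True
    then have "\<Theta> n = proj n \<theta>" unfolding \<Theta>_def by simp
    then show ?thesis using proj_path[OF p n True] by simp
  next
    case False
    then have "m \<le> n" by simp
    then show ?thesis using \<Theta>ge[OF \<open>m \<le> n\<close>] Ppath[OF \<open>m \<le> n\<close>] by simp
  qed
  have w2: "proj k (\<Theta> n) = \<Theta> k" if nk: "1 \<le> k" "k < n" for n k
  proof (cases "n \<le> m")
    case True
    then have "\<Theta> n = proj n \<theta>" "\<Theta> k = proj k \<theta>" using nk unfolding \<Theta>_def by auto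
    then show ?thesis using proj_proj[of k n \<theta>] nk by simp
  next
    case False
    then have mn: "m \<le> n" by simp
    show ?thesis
    proof (cases "m \<le> k")
      case True
      have "proj k (\<Theta> n) = remdups_adj (P k)"
        unfolding proj_def \<Theta>ge[OF mn] using Ptake[OF True, of n] nk by simp
      also have "\<dots> = P k" using path_dadj[OF Ppath[OF True]] distinct_adj_altdef by blast
      finally show ?thesis using \<Theta>ge[OF True] by simp
    next
      case f2: False
      then have "\<Theta> k = proj k \<theta>" unfolding \<Theta>_def by simp
      moreover have "proj k (\<Theta> n) = proj k \<theta>"
        unfolding proj_def \<Theta>ge[OF mn] using Ptake2[of k n] f2 by simp
      ultimately show ?thesis by simp
    qed
  qed
  have w3: "convergent (\<lambda>n. real (path_len (\<Theta> n)))"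
  proof -
    have "\<forall>n\<ge>m. real (path_len (\<Theta> n)) = real (path_len \<theta>)"
    proof (intro allI impI)
      fix n assume "m \<le> n"
      then have "\<Theta> n = P n" by (rule \<Theta>ge)
      then show "real (path_len (\<Theta> n)) = real (path_len \<theta>)" unfolding P_def path_len_def by simp
    qed
    then have "eventually (\<lambda>n. real (path_len (\<Theta> n)) = real (path_len \<theta>)) sequentially"
      unfolding eventually_sequentially by blast
    then have "(\<lambda>n. real (path_len (\<Theta> n))) \<longlonglongrightarrow> real (path_len \<theta>)"
      by (rule tendsto_eventually)
    then show ?thesis unfolding convergent_def by blast
  qed
  have "ipath_witness S E tp I m \<theta> \<Theta>"
    unfolding ipath_witness_def using m \<Theta>m w1 w2 w3 by blast
  then show ?thesis unfolding intersection_path_def by blast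
qed

lemma wedge_lt: "x \<noteq> y \<Longrightarrow> length x = n \<Longrightarrow> length y = n \<Longrightarrow> wedge x y < n
   \<Longrightarrow> take (n - 1) x \<noteq> take (n - 1) y"
proof
  assume h: "x \<noteq> y" "length x = n" "length y = n" "wedge x y < n" "take (n - 1) x = take (n - 1) y"
  have "\<exists>k. take k x \<noteq> take k y" using h by (intro exI[of _ n]) simp
  then have "take (wedge x y) x \<noteq> take (wedge x y) y" unfolding wedge_def by (rule LeastI_ex)
  moreover have "take (wedge x y) x = take (wedge x y) (take (n - 1) x)"
    "take (wedge x y) y = take (wedge x y) (take (n - 1) y)" using h(4) by (simp_all add: min_def, linarith+)
  ultimately show False using h(5) by metis
qed

lemma wedge_le: "take (n - 1) x \<noteq> take (n - 1) y \<Longrightarrow> wedge x y \<le> n - 1"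
  unfolding wedge_def by (rule Least_le)

lemma nc_ip:
  assumes n: "1 < n" and p: "is_path S E tp I n \<theta>" and nc: "non_collapsing n \<theta>"
  shows "intersection_path S E tp I n \<theta>"
proof (rule ext_ip[OF p _ _ _, of last])
  show "1 \<le> n" using n by simp
  show "\<forall>x\<in>set \<theta>. last x \<in> S"
  proof
    fix x assume "x \<in> set \<theta>"
    then have "x \<in> words S n" using p unfolding is_path_def by blast
    then have "x \<noteq> []" "set x \<subseteq> S" using n unfolding words_def by auto
    then show "last x \<in> S" using last_in_set by blast
  qed
  show "\<forall>i. Suc i < length \<theta> \<longrightarrow> (\<exists>t. ((\<theta>!i, \<theta>!Suc i, t) \<in> te n \<and> (last (\<theta>!i), last (\<theta>!Suc i)) \<in> I t)
               \<or> ((\<theta>!Suc i, \<theta>!i, t) \<in> te n \<and> (last (\<theta>!Suc i), last (\<theta>!i)) \<in> I t))"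
  proof (intro allI impI)
    fix i assume i: "Suc i < length \<theta>"
    define x where "x = \<theta>!i"
    define y where "y = \<theta>!Suc i"
    have a: "adj n x y" using p i unfolding is_path_def x_def y_def by blast
    have xy: "x \<noteq> y" using adj_props[OF a] .
    have "x \<in> set \<theta>" "y \<in> set \<theta>" using i unfolding x_def y_def by auto
    then have lxy: "length x = n" "length y = n" using p unfolding is_path_def words_def by auto
    have "wedge x y < n" using nc i unfolding non_collapsing_def x_def y_def by blast
    then have tk: "take (n - 1) x \<noteq> take (n - 1) y" using wedge_lt xy lxy by blast
    then have tk': "take (n - 1) y \<noteq> take (n - 1) x" by simp
    from a consider t where "(x, y, t) \<in> te n" | t where "(y, x, t) \<in> te n" unfolding edges_def by auto
    then show "\<exists>t. ((\<theta>!i, \<theta>!Suc i, t) \<in> te n \<and> (last (\<theta>!i), last (\<theta>!Suc i)) \<in> I t)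
               \<or> ((\<theta>!Suc i, \<theta>!i, t) \<in> te n \<and> (last (\<theta>!Suc i), last (\<theta>!i)) \<in> I t)"
    proof cases
      case (1 t) then show ?thesis using te_noncoll[OF 1 n tk] unfolding x_def y_def by blast
    next
      case (2 t) then show ?thesis using te_noncoll[OF 2 n tk'] unfolding x_def y_def by blast
    qed
  qed
qed


lemma two_aux:
  assumes m: "1 \<le> m" and p: "is_path S E tp I m \<theta>" and sub: "set \<theta> \<subseteq> {x, y}"
    and e: "(x, y, t) \<in> te m"
  shows "intersection_path S E tp I m \<theta>"
proof -
  have tT: "t \<in> T" using te_props[OF e] by blast
  obtain a b where ab: "(a, b) \<in> I t" using I_ne[OF tT] by auto
  have abS: "a \<in> S" "b \<in> S" using ab I_sub[OF tT] by auto
  have xy: "x \<noteq> y" using te_props[OF e] by blast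
  define c where "c z = (if z = x then a else b)" for z
  show ?thesis
  proof (rule ext_ip[OF p m, of c])
    show "\<forall>z\<in>set \<theta>. c z \<in> S" using abS unfolding c_def by auto
    show "\<forall>i. Suc i < length \<theta> \<longrightarrow> (\<exists>t. ((\<theta>!i, \<theta>!Suc i, t) \<in> te m \<and> (c (\<theta>!i), c (\<theta>!Suc i)) \<in> I t)
               \<or> ((\<theta>!Suc i, \<theta>!i, t) \<in> te m \<and> (c (\<theta>!Suc i), c (\<theta>!i)) \<in> I t))"
    proof (intro allI impI)
      fix i assume i: "Suc i < length \<theta>"
      have ne: "\<theta>!i \<noteq> \<theta>!Suc i" using path_dadj[OF p] i distinct_adj_nth by blast
      have "\<theta>!i \<in> {x, y}" "\<theta>!Suc i \<in> {x, y}" proof -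
        have "\<theta>!i \<in> set \<theta>" "\<theta>!Suc i \<in> set \<theta>" using i by simp_all
        then show "\<theta>!i \<in> {x, y}" "\<theta>!Suc i \<in> {x, y}" using sub by blast+
      qed
      then have "(\<theta>!i = x \<and> \<theta>!Suc i = y) \<or> (\<theta>!i = y \<and> \<theta>!Suc i = x)" using ne by auto
      then show "\<exists>t. ((\<theta>!i, \<theta>!Suc i, t) \<in> te m \<and> (c (\<theta>!i), c (\<theta>!Suc i)) \<in> I t)
               \<or> ((\<theta>!Suc i, \<theta>!i, t) \<in> te m \<and> (c (\<theta>!Suc i), c (\<theta>!i)) \<in> I t)"
        using e ab xy unfolding c_def by auto
    qed
  qed
qed

lemma two_ip:
  assumes m: "1 \<le> m" and p: "is_path S E tp I m \<theta>" and card: "card (set \<theta>) \<le> 2"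
  shows "intersection_path S E tp I m \<theta>"
proof (cases "length \<theta> = 1")
  case True
  obtain s where s: "s \<in> S" using S_ne by auto
  show ?thesis
  proof (rule ext_ip[OF p m, of "\<lambda>_. s"])
    show "\<forall>x\<in>set \<theta>. s \<in> S" using s by simp
  qed (use True in simp)
next
  case False
  then have l2: "Suc 1 < length \<theta> \<or> Suc 0 < length \<theta>" using p unfolding is_path_def
    by (cases \<theta>) auto
  then have l: "Suc 0 < length \<theta>" by auto
  define w where "w = \<theta>!0"
  define v where "v = \<theta>!1"
  have a: "adj m w v" using p l unfolding is_path_def w_def v_def by fastforce
  have wv: "w \<noteq> v" using adj_props[OF a] .
  have "\<theta>!0 \<in> set \<theta>" "\<theta>!1 \<in> set \<theta>" using l by (meson nth_mem less_trans zero_less_Suc, simp)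
  then have sub1: "{w, v} \<subseteq> set \<theta>" unfolding w_def v_def by auto
  have "card {w, v} = 2" using wv by simp
  then have "set \<theta> = {w, v}" using card sub1
    using card_seteq[OF List.finite_set sub1] by simp
  then have sub: "set \<theta> \<subseteq> {w, v}" "set \<theta> \<subseteq> {v, w}" by auto
  from a consider t where "(w, v, t) \<in> te m" | t where "(v, w, t) \<in> te m" unfolding edges_def by auto
  then show ?thesis
  proof cases
    case (1 t) then show ?thesis using two_aux[OF m p sub(1)] by blast
  next
    case (2 t) then show ?thesis using two_aux[OF m p sub(2)] by blast
  qed
qed

lemma nat_close: "\<bar>real a - real b\<bar> < 1 \<Longrightarrow> a = b" for a b :: nat
proof (rule ccontr)
  assume h: "\<bar>real a - real b\<bar> < 1" "a \<noteq> b"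
  then consider "a + 1 \<le> b" | "b + 1 \<le> a" by linarith
  then show False
  proof cases
    case 1
    then have "real a + 1 \<le> real b" by linarith
    then show False using h(1) by linarith
  next
    case 2
    then have "real b + 1 \<le> real a" by linarith
    then show False using h(1) by linarith
  qed
qed

lemma witness_nc:
  assumes w: "ipath_witness S E tp I m \<theta> \<Theta>"
  shows "\<exists>N. \<forall>n\<ge>N. 1 < n \<and> non_collapsing n (\<Theta> n)"
proof -
  have paths: "\<And>n. 1 \<le> n \<Longrightarrow> is_path S E tp I n (\<Theta> n)"
    and pr: "\<And>n k. 1 \<le> k \<Longrightarrow> k < n \<Longrightarrow> proj k (\<Theta> n) = \<Theta> k"
    and cv: "convergent (\<lambda>n. real (path_len (\<Theta> n)))"
    using w unfolding ipath_witness_def by auto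
  have "Cauchy (\<lambda>n. real (path_len (\<Theta> n)))" using convergent_Cauchy[OF cv] .
  from CauchyD[OF this, of 1] obtain N0 where
    N0: "\<forall>p\<ge>N0. \<forall>q\<ge>N0. norm (real (path_len (\<Theta> p)) - real (path_len (\<Theta> q))) < 1" by auto
  have eqL: "path_len (\<Theta> p) = path_len (\<Theta> q)" if "p \<ge> N0" "q \<ge> N0" for p q
  proof -
    have "norm (real (path_len (\<Theta> p)) - real (path_len (\<Theta> q))) < 1" using N0 that by simp
    then show ?thesis by (intro nat_close) simp
  qed
  show ?thesis
  proof (intro exI[of _ "N0 + 2"] allI impI conjI)
    fix n assume n: "N0 + 2 \<le> n"
    then show "1 < n" by simp
    define k where "k = n - 1"
    have k: "1 \<le> k" "k < n" "k \<ge> N0" using n unfolding k_def by auto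
    have pn: "is_path S E tp I n (\<Theta> n)" using paths n by simp
    have pk: "is_path S E tp I k (\<Theta> k)" using paths k by simp
    have "path_len (\<Theta> k) = path_len (\<Theta> n)" using k n by (intro eqL) auto
    moreover have "\<Theta> k \<noteq> []" "\<Theta> n \<noteq> []" using pn pk unfolding is_path_def by auto
    ultimately have "length (\<Theta> k) = length (\<Theta> n)" unfolding path_len_def
      by (cases "\<Theta> k"; cases "\<Theta> n") auto
    then have "length (remdups_adj (map (take k) (\<Theta> n))) = length (map (take k) (\<Theta> n))"
      using pr[OF k(1,2)] unfolding proj_def by simp
    then have da: "distinct_adj (map (take k) (\<Theta> n))"
      by (simp only: distinct_adj_conv_length_remdups_adj)
    show "non_collapsing n (\<Theta> n)" unfolding non_collapsing_def
    proof (intro allI impI)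
      fix i assume i: "Suc i < length (\<Theta> n)"
      have "take k (\<Theta> n ! i) \<noteq> take k (\<Theta> n ! Suc i)"
        using distinct_adj_nth[OF da, of i] i by simp
      then have "wedge (\<Theta> n ! i) (\<Theta> n ! Suc i) \<le> n - 1" unfolding k_def by (rule wedge_le)
      then show "wedge (\<Theta> n ! i) (\<Theta> n ! Suc i) < n" using k by simp
    qed
  qed
qed

lemma dG_le: "is_path S E tp I n \<pi> \<Longrightarrow> dG S E tp I n (hd \<pi>) (last \<pi>) \<le> path_len \<pi>"
  unfolding dG_def by (rule Least_le) blast

lemma dG_ex: "is_path S E tp I n \<pi> \<Longrightarrow> \<exists>\<pi>'. is_path S E tp I n \<pi>' \<and> hd \<pi>' = hd \<pi> \<and> last \<pi>' = last \<pi>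
    \<and> path_len \<pi>' = dG S E tp I n (hd \<pi>) (last \<pi>)"
  unfolding dG_def by (rule LeastI_ex) blast

lemma path_rev: "is_path S E tp I n \<pi> \<Longrightarrow> is_path S E tp I n (rev \<pi>)"
  unfolding is_path_succ successively_rev by (auto elim!: successively_mono)

lemma path_app: assumes p1: "is_path S E tp I n \<pi>1" and p2: "is_path S E tp I n \<pi>2" and eq: "last \<pi>1 = hd \<pi>2"
  shows "is_path S E tp I n (\<pi>1 @ tl \<pi>2) \<and> hd (\<pi>1 @ tl \<pi>2) = hd \<pi>1 \<and> last (\<pi>1 @ tl \<pi>2) = last \<pi>2
     \<and> path_len (\<pi>1 @ tl \<pi>2) = path_len \<pi>1 + path_len \<pi>2"
proof -
  obtain a r where r: "\<pi>2 = a # r" using p2 unfolding is_path_def by (cases \<pi>2) auto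
  have ne1: "\<pi>1 \<noteq> []" using p1 unfolding is_path_def by simp
  have s1: "successively (adj n) \<pi>1" and s2: "successively (adj n) (a # r)"
    using p1 p2 r unfolding is_path_succ by auto
  have "successively (adj n) (\<pi>1 @ r)"
    unfolding successively_append_iff using s1 s2 eq r ne1 by (auto simp: successively_Cons)
  moreover have "set (\<pi>1 @ r) \<subseteq> words S n" using p1 p2 r unfolding is_path_def by auto
  ultimately have "is_path S E tp I n (\<pi>1 @ r)" using ne1 unfolding is_path_succ by simp
  moreover have "last (\<pi>1 @ r) = last \<pi>2" using r eq by simp
  moreover have "path_len (\<pi>1 @ r) = path_len \<pi>1 + path_len \<pi>2"
    unfolding path_len_def using r ne1 by (cases \<pi>1) auto
  ultimately show ?thesis using r ne1 by simp
qed

lemma diam_le: "(\<And>x y. x \<in> A \<Longrightarrow> y \<in> A \<Longrightarrow> dG S E tp I n x y \<le> D) \<Longrightarrow> diamG S E tp I n A \<le> enat D"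
  unfolding diamG_def by (intro SUP_least) auto

lemma diam_ge: "x \<in> A \<Longrightarrow> y \<in> A \<Longrightarrow> enat (dG S E tp I n x y) \<le> diamG S E tp I n A"
  unfolding diamG_def by (intro SUP_upper2[of x] SUP_upper2[of y]) auto

lemma diam_mono: "A \<subseteq> B \<Longrightarrow> diamG S E tp I n A \<le> diamG S E tp I n B"
  unfolding diamG_def by (intro SUP_subset_mono) auto

lemma prefix_nc_ip:
  assumes n: "1 < n" and p: "is_path S E tp I n \<theta>" and nc: "non_collapsing n \<theta>" and j: "j < length \<theta>"
  shows "\<theta> ! j \<in> fund_nbhd S E tp I (hd \<theta>)"
proof -
  define \<theta>' where "\<theta>' = take (Suc j) \<theta>"
  have ne: "\<theta> \<noteq> []" using p unfolding is_path_def by simp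
  have p': "is_path S E tp I n \<theta>'"
    using p j set_take_subset[of "Suc j" \<theta>] unfolding is_path_def \<theta>'_def by auto
  have nc': "non_collapsing n \<theta>'" using nc j unfolding non_collapsing_def \<theta>'_def by auto
  have ip: "intersection_path S E tp I n \<theta>'" by (rule nc_ip[OF n p' nc'])
  have hd: "hd \<theta>' = hd \<theta>" unfolding \<theta>'_def using ne by (cases \<theta>) auto
  have lst: "last \<theta>' = \<theta> ! j" unfolding \<theta>'_def using j by (simp add: take_Suc_conv_app_nth)
  have hw: "hd \<theta> \<in> words S n" using p ne unfolding is_path_def by auto
  then have ln: "length (hd \<theta>) = n" unfolding words_def by simp
  have "\<theta> ! j \<in> words S n" using p j unfolding is_path_def by auto
  then show ?thesis unfolding fund_nbhd_def ln using ip hd lst by blast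
qed

lemma near:
  assumes D: "\<And>n \<theta>. 1 < n \<Longrightarrow> is_path S E tp I n \<theta> \<Longrightarrow> non_collapsing n \<theta> \<Longrightarrow> diamG S E tp I n (set \<theta>) \<le> enat D"
    and x: "x \<in> fund_nbhd S E tp I w" and m: "1 \<le> length w"
  shows "\<exists>\<pi>. is_path S E tp I (length w) \<pi> \<and> hd \<pi> = w \<and> last \<pi> = x \<and> path_len \<pi> \<le> D"
proof -
  define m where "m = length w"
  obtain \<theta> \<Theta> where w: "ipath_witness S E tp I m \<theta> \<Theta>" and hd: "hd \<theta> = w" and lst: "last \<theta> = x"
    using x unfolding fund_nbhd_def intersection_path_def m_def by blast
  obtain N where N: "\<forall>n\<ge>N. 1 < n \<and> non_collapsing n (\<Theta> n)" using witness_nc[OF w] by blast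
  define n where "n = max N (m + 1)"
  have nN: "n \<ge> N" "m < n" unfolding n_def by auto
  have pn: "is_path S E tp I n (\<Theta> n)" using w nN m unfolding ipath_witness_def m_def by auto
  have nc: "1 < n" "non_collapsing n (\<Theta> n)" using N nN by auto
  have prj: "proj m (\<Theta> n) = \<theta>" using w nN m unfolding ipath_witness_def m_def by auto
  have ne: "\<Theta> n \<noteq> []" using pn unfolding is_path_def by simp
  have "enat (dG S E tp I n (hd (\<Theta> n)) (last (\<Theta> n))) \<le> diamG S E tp I n (set (\<Theta> n))"
    using ne by (intro diam_ge) auto
  also have "\<dots> \<le> enat D" using D[OF nc(1) pn nc(2)] .
  finally have dD: "dG S E tp I n (hd (\<Theta> n)) (last (\<Theta> n)) \<le> D" by simp
  obtain \<pi>' where \<pi>': "is_path S E tp I n \<pi>'" "hd \<pi>' = hd (\<Theta> n)" "last \<pi>' = last (\<Theta> n)"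
    "path_len \<pi>' = dG S E tp I n (hd (\<Theta> n)) (last (\<Theta> n))" using dG_ex[OF pn] by blast
  have ne': "\<pi>' \<noteq> []" using \<pi>'(1) unfolding is_path_def by simp
  have "is_path S E tp I m (proj m \<pi>')" using proj_path[OF \<pi>'(1)] m nN unfolding m_def by simp
  moreover have "hd (proj m \<pi>') = w"
    using proj_hd[OF ne'] proj_hd[OF ne, of m] prj hd \<pi>'(2) by simp
  moreover have "last (proj m \<pi>') = x"
    using proj_last[OF ne'] proj_last[OF ne, of m] prj lst \<pi>'(3) by simp
  moreover have "path_len (proj m \<pi>') \<le> D" using proj_len[of m \<pi>'] \<pi>'(4) dD by simp
  ultimately show ?thesis unfolding m_def by blast
qed

lemma bg_iff:
  "bounded_geometry S E tp I \<longleftrightarrow>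
          (SUP p\<in>{(n, \<theta>). 1 < n \<and> is_path S E tp I n \<theta> \<and> non_collapsing n \<theta>}.
              diamG S E tp I (fst p) (set (snd p))) < \<infinity>"
  (is "?L \<longleftrightarrow> ?R")
proof
  assume ?L
  then obtain B where B: "(SUP w\<in>all_words S. diamG S E tp I (length w) (fund_nbhd S E tp I w)) = enat B"
    unfolding bounded_geometry_def using less_infinityE by blast
  have "(SUP p\<in>{(n, \<theta>). 1 < n \<and> is_path S E tp I n \<theta> \<and> non_collapsing n \<theta>}.
              diamG S E tp I (fst p) (set (snd p))) \<le> enat B"
  proof (rule SUP_least)
    fix p assume "p \<in> {(n, \<theta>). 1 < n \<and> is_path S E tp I n \<theta> \<and> non_collapsing n \<theta>}"
    then obtain n \<theta> where p: "p = (n, \<theta>)" "1 < n" "is_path S E tp I n \<theta>" "non_collapsing n \<theta>" by auto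
    have ne: "\<theta> \<noteq> []" using p unfolding is_path_def by simp
    have hw: "hd \<theta> \<in> words S n" using p ne unfolding is_path_def by auto
    then have ln: "length (hd \<theta>) = n" unfolding words_def by simp
    have aw: "hd \<theta> \<in> all_words S" unfolding all_words_def using hw p(2) by auto
    have "set \<theta> \<subseteq> fund_nbhd S E tp I (hd \<theta>)"
    proof
      fix x assume "x \<in> set \<theta>"
      then obtain j where "j < length \<theta>" "x = \<theta> ! j" by (auto simp: in_set_conv_nth)
      then show "x \<in> fund_nbhd S E tp I (hd \<theta>)" using prefix_nc_ip[OF p(2,3,4)] by simp
    qed
    then have "diamG S E tp I n (set \<theta>) \<le> diamG S E tp I (length (hd \<theta>)) (fund_nbhd S E tp I (hd \<theta>))"
      using diam_mono ln by simp
    also have "\<dots> \<le> enat B" unfolding B[symmetric] using aw by (rule SUP_upper)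
    finally show "diamG S E tp I (fst p) (set (snd p)) \<le> enat B" using p by simp
  qed
  then show ?R by (rule le_less_trans) simp
next
  assume ?R
  then obtain D where D0: "(SUP p\<in>{(n, \<theta>). 1 < n \<and> is_path S E tp I n \<theta> \<and> non_collapsing n \<theta>}.
              diamG S E tp I (fst p) (set (snd p))) = enat D"
    using less_infinityE by blast
  have D: "diamG S E tp I n (set \<theta>) \<le> enat D" if "1 < n" "is_path S E tp I n \<theta>" "non_collapsing n \<theta>" for n \<theta>
  proof -
    have "diamG S E tp I (fst (n, \<theta>)) (set (snd (n, \<theta>))) \<le> enat D"
      unfolding D0[symmetric] using that by (intro SUP_upper) auto
    then show ?thesis by simp
  qed
  have "(SUP w\<in>all_words S. diamG S E tp I (length w) (fund_nbhd S E tp I w)) \<le> enat (2 * D)"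
  proof (rule SUP_least)
    fix w assume "w \<in> all_words S"
    then have m: "1 \<le> length w" unfolding all_words_def words_def by auto
    show "diamG S E tp I (length w) (fund_nbhd S E tp I w) \<le> enat (2 * D)"
    proof (rule diam_le)
      fix x y assume x: "x \<in> fund_nbhd S E tp I w" and y: "y \<in> fund_nbhd S E tp I w"
      obtain \<pi>1 where \<pi>1: "is_path S E tp I (length w) \<pi>1" "hd \<pi>1 = w" "last \<pi>1 = x" "path_len \<pi>1 \<le> D"
        using near[OF D x m] by blast
      obtain \<pi>2 where \<pi>2: "is_path S E tp I (length w) \<pi>2" "hd \<pi>2 = w" "last \<pi>2 = y" "path_len \<pi>2 \<le> D"
        using near[OF D y m] by blast
      have ne1: "\<pi>1 \<noteq> []" using \<pi>1(1) unfolding is_path_def by simp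
      have r: "is_path S E tp I (length w) (rev \<pi>1)" using path_rev[OF \<pi>1(1)] .
      have lr: "last (rev \<pi>1) = hd \<pi>2" "hd (rev \<pi>1) = x" "path_len (rev \<pi>1) = path_len \<pi>1"
        using \<pi>1 \<pi>2 ne1 by (auto simp: hd_rev last_rev path_len_def)
      have c: "is_path S E tp I (length w) (rev \<pi>1 @ tl \<pi>2) \<and> hd (rev \<pi>1 @ tl \<pi>2) = hd (rev \<pi>1)
          \<and> last (rev \<pi>1 @ tl \<pi>2) = last \<pi>2 \<and> path_len (rev \<pi>1 @ tl \<pi>2) = path_len (rev \<pi>1) + path_len \<pi>2"
        by (rule path_app[OF r \<pi>2(1) lr(1)])
      have "dG S E tp I (length w) x y \<le> path_len (rev \<pi>1 @ tl \<pi>2)"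
        using dG_le[of "length w" "rev \<pi>1 @ tl \<pi>2"] c lr \<pi>2 by simp
      also have "\<dots> \<le> 2 * D" using c lr \<pi>1 \<pi>2 by simp
      finally show "dG S E tp I (length w) x y \<le> 2 * D" .
    qed
  qed
  then show ?L unfolding bounded_geometry_def by (rule le_less_trans) simp
qed

end

theorem lemma5p3:
  fixes S :: "'v set" and E :: "('v \<times> 'v) set" and tp :: "'v \<times> 'v \<Rightarrow> 't"
    and T :: "'t set" and I :: "'t \<Rightarrow> ('v \<times> 'v) set"
  assumes igs: "is_IGS S E tp T I"
    and gr1: "GR1 S T I" and gr2: "GR2 S E tp T I" and gr3: "GR3 T I"
  shows "(\<forall>m \<theta>. 1 \<le> m \<and> is_path S E tp I m \<theta> \<and> card (set \<theta>) \<le> 2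
            \<longrightarrow> intersection_path S E tp I m \<theta>)
     \<and> (\<forall>n \<theta>. 1 < n \<and> is_path S E tp I n \<theta> \<and> non_collapsing n \<theta>
            \<longrightarrow> intersection_path S E tp I n \<theta>)
     \<and> (\<forall>m \<theta> \<Theta>. ipath_witness S E tp I m \<theta> \<Theta>
            \<longrightarrow> (\<exists>N. \<forall>n\<ge>N. 1 < n \<and> non_collapsing n (\<Theta> n)))
     \<and> (bounded_geometry S E tp I \<longleftrightarrow>
          (SUP p\<in>{(n, \<theta>). 1 < n \<and> is_path S E tp I n \<theta> \<and> non_collapsing n \<theta>}.
              diamG S E tp I (fst p) (set (snd p))) < \<infinity>)"
proof -
  interpret igsl S E tp T I by unfold_locales (rule igs)
  have c1: "\<forall>m \<theta>. 1 \<le> m \<and> is_path S E tp I m \<theta> \<and> card (set \<theta>) \<le> 2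
            \<longrightarrow> intersection_path S E tp I m \<theta>" using two_ip by blast
  have c2: "\<forall>n \<theta>. 1 < n \<and> is_path S E tp I n \<theta> \<and> non_collapsing n \<theta>
            \<longrightarrow> intersection_path S E tp I n \<theta>" using nc_ip by blast
  have c3: "\<forall>m \<theta> \<Theta>. ipath_witness S E tp I m \<theta> \<Theta>
            \<longrightarrow> (\<exists>N. \<forall>n\<ge>N. 1 < n \<and> non_collapsing n (\<Theta> n))" using witness_nc by blast
  show ?thesis using c1 c2 c3 bg_iff by blast
qed

end
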